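(* The function $\phi:(0,\infty)\to\mathbb{R}$, $\phi(x)=\frac{1}{\tanh^2(x)}-\frac{1}{x\tanh(x)}$, is increasing on $(0,\infty)$. *)

theory Defs
  imports "HOL-Analysis.Analysis"
begin

end

theory Submission imports Defs begin

lemma ser0: "(\<lambda>n. a^n * x^n / fact n) sums exp (a*x::real)"
  using exp_converges[of "a*x"] by (simp add: power_mult_distrib divide_inverse mult_ac)

lemma ser1: "(\<lambda>n. real n * a^(n-1) * x^n / fact n) sums (x * exp (a*x::real))"
proof -
  have "(\<lambda>n. x * (a^n * x^n / fact n)) sums (x * exp (a*x))"
    by (rule sums_mult[OF ser0])
  moreover have "(\<lambda>n. x * (a^n * x^n / fact n)) = (\<lambda>n. (\<lambda>n. real n * a^(n-1) * x^n / fact n) (Suc n))"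
  proof
    fix n
    have f: "fact (Suc n) = (real n + 1) * (fact n::real)" by simp
    have "(fact n::real) > 0" "real n + 1 > 0" by simp_all
    then show "x * (a^n * x^n / fact n) = (\<lambda>n. real n * a^(n-1) * x^n / fact n) (Suc n)"
      unfolding f by (simp add: divide_simps del: fact_Suc)
  qed
  ultimately show ?thesis using sums_Suc_iff[of "\<lambda>n. real n * a^(n-1) * x^n / fact n"] by simp
qed

lemma ser2: "(\<lambda>n. real n * real (n-1) * a^(n-2) * x^n / fact n) sums (x^2 * exp (a*x::real))"
proof -
  have "(\<lambda>n. x * (real n * a^(n-1) * x^n / fact n)) sums (x * (x * exp (a*x)))"
    by (rule sums_mult[OF ser1])
  moreover have "(\<lambda>n. x * (real n * a^(n-1) * x^n / fact n)) = (\<lambda>n. (\<lambda>n. real n * real (n-1) * a^(n-2) * x^n / fact n) (Suc n))"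
  proof
    fix n
    have f: "fact (Suc n) = (real n + 1) * (fact n::real)" by simp
    have "(fact n::real) > 0" "real n + 1 > 0" by simp_all
    then show "x * (real n * a^(n-1) * x^n / fact n) = (\<lambda>n. real n * real (n-1) * a^(n-2) * x^n / fact n) (Suc n)"
      proof (cases n)
      case (Suc m) then show ?thesis using \<open>(fact n::real) > 0\<close> \<open>real n + 1 > 0\<close>
        unfolding f by (simp add: divide_simps del: fact_Suc of_nat_Suc)
    qed simp
  qed
  ultimately show ?thesis using sums_Suc_iff[of "\<lambda>n. real n * real (n-1) * a^(n-2) * x^n / fact n"]
    by (simp add: power2_eq_square mult_ac)
qed

definition dd :: "nat \<Rightarrow> real" where
  "dd n = (3^n + (-3)^n - 1 - (-1)^n)/8 + real n*(1 - (-1)^(n-1))/2 - real n*real (n-1)*(1 + (-1)^(n-2))"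

lemma g_sums: "(\<lambda>n. dd n * x^n / fact n) sums
   (cosh x * sinh x^2 + x * sinh x - 2*x^2*cosh (x::real))"
proof -
  have A: "(\<lambda>n. (1/8)*((3^n * x^n / fact n + (-3)^n * x^n / fact n) - (1^n * x^n / fact n) - (-1)^n * x^n / fact n)
     + (1/2)*(real n * 1^(n-1) * x^n / fact n - real n * (-1)^(n-1) * x^n / fact n)
     - (real n * real (n-1) * 1^(n-2) * x^n / fact n + real n * real (n-1) * (-1)^(n-2) * x^n / fact n))
    sums ((1/8)*((exp (3*x) + exp ((-3)*x)) - exp (1*x) - exp ((-1)*x))
     + (1/2)*(x * exp (1*x) - x * exp ((-1)*x)) - (x^2 * exp (1*x) + x^2 * exp ((-1)*x)))"
    by (intro sums_add sums_diff sums_mult ser0 ser1 ser2)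
  have B: "(\<lambda>n. (1/8)*((3^n * x^n / fact n + (-3)^n * x^n / fact n) - (1^n * x^n / fact n) - (-1)^n * x^n / fact n)
     + (1/2)*(real n * 1^(n-1) * x^n / fact n - real n * (-1)^(n-1) * x^n / fact n)
     - (real n * real (n-1) * 1^(n-2) * x^n / fact n + real n * real (n-1) * (-1)^(n-2) * x^n / fact n))
    = (\<lambda>n. dd n * x^n / fact n)"
    by (rule ext) (simp add: dd_def divide_simps, simp add: algebra_simps)
  have e3: "exp (3*x) = exp x ^ 3" "exp ((-3)*x) = inverse (exp x) ^ 3"
    by (simp_all add: exp_of_nat_mult[symmetric] exp_minus[symmetric] power_inverse[symmetric])
  have C: "(1/8)*((exp (3*x) + exp ((-3)*x)) - exp (1*x) - exp ((-1)*x))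
     + (1/2)*(x * exp (1*x) - x * exp ((-1)*x)) - (x^2 * exp (1*x) + x^2 * exp ((-1)*x))
     = cosh x * sinh x^2 + x * sinh x - 2*x^2*cosh (x::real)"
  proof -
    have ep: "exp x > 0" by simp
    show ?thesis unfolding e3 cosh_def sinh_def exp_minus using ep
      by (simp add: exp_minus divide_simps power2_eq_square power3_eq_cube) (simp add: algebra_simps)
  qed
  show ?thesis using A unfolding B C .
qed

lemma dd_eq: "dd n = (if even n then (3^n - 1)/4 + 3*real n - 2*real n^2 else 0)"
proof (cases "even n")
  case True
  then obtain k where k: "n = 2*k" by auto
  show ?thesis
  proof (cases k)
    case 0 then show ?thesis using k by (simp add: dd_def)
  next
    case (Suc m)
    then have n: "n = 2*m+2" using k by auto
    have "n - 1 = 2*m + 1" "n - 2 = 2*m" using n by auto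
    then show ?thesis unfolding dd_def using True n by (simp add: power_add power_mult) (simp add: field_simps power2_eq_square)
  qed
next
  case False
  then obtain k where k: "n = 2*k+1" using oddE by blast
  show ?thesis
  proof (cases k)
    case 0 then show ?thesis using k by (simp add: dd_def)
  next
    case (Suc m)
    then have n: "n = 2*m+3" using k by auto
    have "n - 1 = 2*m+2" "n - 2 = 2*m + 1" using n by auto
    then show ?thesis unfolding dd_def using False n by (simp add: power_add power_mult)
  qed
qed

lemma nine_pow: "k \<ge> 3 \<Longrightarrow> (9::real)^k \<ge> 32*real k^2 - 24*real k + 2"
proof (induction k rule: dec_induct)
  case base then show ?case by simp
next
  case (step k)
  have k1: "real k \<ge> 1" using step.hyps by simp
  have kk: "real k * real k \<ge> real k * 1" by (rule mult_left_mono) (use k1 in auto)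
  have "(9::real)^Suc k = 9 * 9^k" by simp
  also have "\<dots> \<ge> 9 * (32*real k^2 - 24*real k + 2)" using step.IH by simp
  finally have a: "(9::real)^Suc k \<ge> 9 * (32*real k^2 - 24*real k + 2)" .
  have "32*real (Suc k)^2 - 24*real (Suc k) + 2 \<le> 9 * (32*real k^2 - 24*real k + 2)"
    using kk by (simp add: power2_eq_square algebra_simps)
  then show ?case using a by linarith
qed

lemma dd_nonneg: "dd n \<ge> 0"
proof -
  { assume "even n"
    then obtain k where k: "n = 2*k" by auto
    have "(3::real)^n = 9^k" using k by (simp add: power_mult)
    moreover have "(9::real)^k \<ge> 32*real k^2 - 24*real k + 1"
    proof (cases "k \<ge> 3")
      case True then show ?thesis using nine_pow[of k] by simp
    next
      case False then have "k = 0 \<or> k = 1 \<or> k = 2" by auto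
      then show ?thesis by auto
    qed
    moreover have "real n = 2 * real k" "real n^2 = 4 * real k^2" using k by (simp_all add: power2_eq_square)
    ultimately have "(3^n - 1)/4 + 3*real n - 2*real n^2 \<ge> 0" by (simp add: field_simps)
  }
  then show ?thesis by (simp add: dd_eq)
qed

lemma g_pos: "x > 0 \<Longrightarrow> cosh x * sinh x^2 + x * sinh x - 2*x^2*cosh (x::real) > 0"
  using g_sums[of x] suminf_pos2[of "\<lambda>n. dd n * x^n / fact n" 6] dd_nonneg
  by (simp add: sums_iff dd_eq sums_unique)

lemma fun_eq: "(\<lambda>x::real. 1 / (tanh x)^2 - 1 / (x * tanh x)) = (\<lambda>x. cosh x^2/sinh x^2 - cosh x/(x * sinh x))"
  by (rule ext) (simp add: tanh_def power_divide)

lemma deriv_phi: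
  assumes "x > (0::real)"
  shows "((\<lambda>x. cosh x^2/sinh x^2 - cosh x/(x * sinh x)) has_real_derivative
     (cosh x * sinh x^2 + x * sinh x - 2*x^2*cosh x) / (x^2 * sinh x^3)) (at x)"
proof -
  have s: "sinh x > 0" using assms by simp
  have c: "cosh x^2 = sinh x^2 + 1" by (rule cosh_square_eq)
  have d1: "((\<lambda>x. cosh x^2/sinh x^2) has_real_derivative (-2*cosh x/sinh x^3)) (at x)"
    apply (rule derivative_eq_intros refl)+
    using s apply simp
    apply (simp add: divide_simps power2_eq_square power3_eq_cube)
    using c apply (simp add: power2_eq_square algebra_simps)
    done
  have d2: "((\<lambda>x. cosh x/(x * sinh x)) has_real_derivative (-(x + cosh x * sinh x)/(x^2 * sinh x^2))) (at x)"
    apply (rule derivative_eq_intros refl)+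
    using s assms apply simp
    using s assms apply (simp add: divide_simps power2_eq_square power3_eq_cube)
    using c apply (simp add: power2_eq_square algebra_simps)
    done
  have e: "-2*cosh x/sinh x^3 - (-(x + cosh x * sinh x)/(x^2 * sinh x^2)) = 
     (cosh x * sinh x^2 + x * sinh x - 2*x^2*cosh x) / (x^2 * sinh x^3)"
    using s assms by (simp add: divide_simps power2_eq_square power3_eq_cube) (simp add: algebra_simps)
  show ?thesis using DERIV_diff[OF d1 d2] unfolding e .
qed

theorem lemma6p3:
  shows "strict_mono_on {0<..} (\<lambda>x::real. 1 / (tanh x)^2 - 1 / (x * tanh x))"
  unfolding fun_eq
proof (rule strict_mono_onI)
  fix a b :: real
  assume h: "a \<in> {0<..}" "b \<in> {0<..}" "a < b"
  show "cosh a^2/sinh a^2 - cosh a/(a * sinh a) < cosh b^2/sinh b^2 - cosh b/(b * sinh b)"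
  proof (rule DERIV_pos_imp_increasing[OF h(3)])
    fix x assume x: "a \<le> x" "x \<le> b"
    then have xp: "x > 0" using h by simp
    show "\<exists>y. ((\<lambda>x. cosh x^2/sinh x^2 - cosh x/(x * sinh x)) has_real_derivative y) (at x) \<and> y > 0"
    proof -
      have "(cosh x * sinh x^2 + x * sinh x - 2*x^2*cosh x) / (x^2 * sinh x^3) > 0"
        using g_pos[OF xp] xp by (intro divide_pos_pos) auto
      then show ?thesis using deriv_phi[OF xp] by blast
    qed
  qed
qed

end
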